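(* Let $R$ be a ring such that every RD-essential extension of left $R$-modules is essential. Then for every two-sided ideal $A$ of $R$, every RD-essential extension of left $R/A$-modules is essential.
   Context: Over a ring $S$, a short exact sequence of left $S$-modules is RD-pure if it remains exact after tensoring with every right module $S/sS$, $s\in S$. An extension $M\subseteq N$ is RD-essential if $M$ is RD-pure in $N$ and for every submodule $K$ of $N$, either $K\cap M\neq0$ or $(M+K)/K$ is not RD-pure in $N/K$. *)

theory Defs
  imports "HOL-Algebra.Module" "HOL-Algebra.QuotRing"
begin

text \<open>Left modules over a (not necessarily commutative) unital ring R.
  The library locale module requires a commutative ring, so we use the
  same axioms over an arbitrary ring.\<close>

definition lmodule :: "('a,'c) ring_scheme \<Rightarrow> ('a,'b,'d) module_scheme \<Rightarrow> bool" where
  "lmodule R M \<longleftrightarrow> ring R \<and> abelian_group M \<and>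
    (\<forall>a\<in>carrier R. \<forall>x\<in>carrier M. a \<odot>\<^bsub>M\<^esub> x \<in> carrier M) \<and>
    (\<forall>a\<in>carrier R. \<forall>b\<in>carrier R. \<forall>x\<in>carrier M.
        (a \<oplus>\<^bsub>R\<^esub> b) \<odot>\<^bsub>M\<^esub> x = a \<odot>\<^bsub>M\<^esub> x \<oplus>\<^bsub>M\<^esub> b \<odot>\<^bsub>M\<^esub> x) \<and>
    (\<forall>a\<in>carrier R. \<forall>x\<in>carrier M. \<forall>y\<in>carrier M.
        a \<odot>\<^bsub>M\<^esub> (x \<oplus>\<^bsub>M\<^esub> y) = a \<odot>\<^bsub>M\<^esub> x \<oplus>\<^bsub>M\<^esub> a \<odot>\<^bsub>M\<^esub> y) \<and>
    (\<forall>a\<in>carrier R. \<forall>b\<in>carrier R. \<forall>x\<in>carrier M.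
        (a \<otimes>\<^bsub>R\<^esub> b) \<odot>\<^bsub>M\<^esub> x = a \<odot>\<^bsub>M\<^esub> (b \<odot>\<^bsub>M\<^esub> x)) \<and>
    (\<forall>x\<in>carrier M. \<one>\<^bsub>R\<^esub> \<odot>\<^bsub>M\<^esub> x = x)"

definition lsubmodule :: "('a,'c) ring_scheme \<Rightarrow> ('a,'b,'d) module_scheme \<Rightarrow> 'b set \<Rightarrow> bool" where
  "lsubmodule R N M \<longleftrightarrow> additive_subgroup M N \<and>
    (\<forall>a\<in>carrier R. \<forall>x\<in>M. a \<odot>\<^bsub>N\<^esub> x \<in> M)"

definition smult_set :: "('a,'b,'d) module_scheme \<Rightarrow> 'a \<Rightarrow> 'b set \<Rightarrow> 'b set" where
  "smult_set N s X = (\<lambda>x. s \<odot>\<^bsub>N\<^esub> x) ` X"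

text \<open>Quotient module N/K: carrier the cosets of K, induced operations.
  (The ring multiplication/one fields are irrelevant for modules.)\<close>

definition quot_module :: "('a,'b,'d) module_scheme \<Rightarrow> 'b set \<Rightarrow> ('a, 'b set) module" where
  "quot_module N K =
    \<lparr>carrier = a_rcosets\<^bsub>N\<^esub> K, monoid.mult = (\<lambda>X Y. K), one = K,
     zero = K, add = set_add N,
     smult = (\<lambda>s X. K <+>\<^bsub>N\<^esub> smult_set N s X)\<rparr>"

text \<open>For a left S-module N, (S/sS) \<otimes>_S N is canonically N/sN,
  and tensoring 0 -> M -> N -> N/M -> 0 with S/sS is always right exact;
  exactness thus amounts to injectivity of M/sM -> N/sN, i.e.
  every element of M lying in sN lies in sM.\<close>

definition rd_pure :: "('a,'c) ring_scheme \<Rightarrow> ('a,'b,'d) module_scheme \<Rightarrow> 'b set \<Rightarrow> bool" where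
  "rd_pure S N M \<longleftrightarrow> lsubmodule S N M \<and>
    (\<forall>s\<in>carrier S. \<forall>x\<in>M. x \<in> smult_set N s (carrier N) \<longrightarrow> x \<in> smult_set N s M)"

definition essential_ext :: "('a,'c) ring_scheme \<Rightarrow> ('a,'b,'d) module_scheme \<Rightarrow> 'b set \<Rightarrow> bool" where
  "essential_ext S N M \<longleftrightarrow> lsubmodule S N M \<and>
    (\<forall>K. lsubmodule S N K \<and> K \<noteq> {\<zero>\<^bsub>N\<^esub>} \<longrightarrow> K \<inter> M \<noteq> {\<zero>\<^bsub>N\<^esub>})"

definition rd_essential_ext :: "('a,'c) ring_scheme \<Rightarrow> ('a,'b,'d) module_scheme \<Rightarrow> 'b set \<Rightarrow> bool" where
  "rd_essential_ext S N M \<longleftrightarrow> rd_pure S N M \<and>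
    (\<forall>K. lsubmodule S N K \<and> K \<noteq> {\<zero>\<^bsub>N\<^esub>} \<longrightarrow>
       K \<inter> M \<noteq> {\<zero>\<^bsub>N\<^esub>} \<or>
       \<not> rd_pure S (quot_module N K) ((\<lambda>x. K +>\<^bsub>N\<^esub> x) ` (M <+>\<^bsub>N\<^esub> K)))"

end

theory Submission
  imports Defs
begin

lemma same_add_struct:
  fixes Q1 :: "('a,'b,'d1) module_scheme" and Q2 :: "('s,'b,'d2) module_scheme"
  assumes c: "carrier Q1 = carrier Q2" and a: "add Q1 = add Q2" and z: "zero Q1 = zero Q2"
  shows "additive_subgroup X Q1 = additive_subgroup X Q2"
    and "a_r_coset Q1 = a_r_coset Q2"
    and "set_add Q1 = set_add Q2"
    and "a_rcosets\<^bsub>Q1\<^esub> K = a_rcosets\<^bsub>Q2\<^esub> K"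
proof -
  show "additive_subgroup X Q1 = additive_subgroup X Q2"
    unfolding additive_subgroup_def subgroup_def m_inv_def using assms by simp
  show "a_r_coset Q1 = a_r_coset Q2"
    unfolding a_r_coset_def r_coset_def[abs_def] using assms by simp
  show "set_add Q1 = set_add Q2"
    unfolding set_add_def set_mult_def[abs_def] using assms by simp
  show "a_rcosets\<^bsub>Q1\<^esub> K = a_rcosets\<^bsub>Q2\<^esub> K"
    unfolding A_RCOSETS_def RCOSETS_def r_coset_def using assms by simp
qed

lemma transfer_mod:
  fixes Q1 :: "('a,'b,'d1) module_scheme" and Q2 :: "('s,'b,'d2) module_scheme"
    and R :: "('a,'c1) ring_scheme" and S :: "('s,'c2) ring_scheme"
  assumes c: "carrier Q1 = carrier Q2" and a: "add Q1 = add Q2" and z: "zero Q1 = zero Q2"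
    and f: "f ` carrier R = carrier S"
    and sm: "\<forall>r\<in>carrier R. smult Q1 r = smult Q2 (f r)"
  shows "lsubmodule R Q1 X = lsubmodule S Q2 X"
    and "rd_pure R Q1 X = rd_pure S Q2 X"
proof -
  have sg: "additive_subgroup X Q1 = additive_subgroup X Q2"
    using same_add_struct[OF c a z] by blast
  have ss: "\<And>r Y. r \<in> carrier R \<Longrightarrow> smult_set Q1 r Y = smult_set Q2 (f r) Y"
    unfolding smult_set_def using sm by simp
  show l: "lsubmodule R Q1 X = lsubmodule S Q2 X"
  proof -
    have "(\<forall>a\<in>carrier R. \<forall>x\<in>X. a \<odot>\<^bsub>Q1\<^esub> x \<in> X) =
          (\<forall>b\<in>carrier S. \<forall>x\<in>X. b \<odot>\<^bsub>Q2\<^esub> x \<in> X)"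
    proof
      assume H: "\<forall>a\<in>carrier R. \<forall>x\<in>X. a \<odot>\<^bsub>Q1\<^esub> x \<in> X"
      show "\<forall>b\<in>carrier S. \<forall>x\<in>X. b \<odot>\<^bsub>Q2\<^esub> x \<in> X"
      proof (intro ballI)
        fix b x assume b: "b \<in> carrier S" and x: "x \<in> X"
        from b f obtain r where r: "r \<in> carrier R" "b = f r" by blast
        show "b \<odot>\<^bsub>Q2\<^esub> x \<in> X" using H r x sm by metis
      qed
    next
      assume H: "\<forall>b\<in>carrier S. \<forall>x\<in>X. b \<odot>\<^bsub>Q2\<^esub> x \<in> X"
      show "\<forall>a\<in>carrier R. \<forall>x\<in>X. a \<odot>\<^bsub>Q1\<^esub> x \<in> X"
      proof (intro ballI)
        fix r x assume r: "r \<in> carrier R" and x: "x \<in> X"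
        have "f r \<in> carrier S" using r f by blast
        then show "r \<odot>\<^bsub>Q1\<^esub> x \<in> X" using H r x sm by metis
      qed
    qed
    then show ?thesis unfolding lsubmodule_def sg by simp
  qed
  show "rd_pure R Q1 X = rd_pure S Q2 X"
  proof -
    have "(\<forall>s\<in>carrier R. \<forall>x\<in>X. x \<in> smult_set Q1 s (carrier Q1) \<longrightarrow> x \<in> smult_set Q1 s X) =
          (\<forall>s\<in>carrier S. \<forall>x\<in>X. x \<in> smult_set Q2 s (carrier Q2) \<longrightarrow> x \<in> smult_set Q2 s X)"
    proof
      assume H: "\<forall>s\<in>carrier R. \<forall>x\<in>X. x \<in> smult_set Q1 s (carrier Q1) \<longrightarrow> x \<in> smult_set Q1 s X"
      show "\<forall>s\<in>carrier S. \<forall>x\<in>X. x \<in> smult_set Q2 s (carrier Q2) \<longrightarrow> x \<in> smult_set Q2 s X"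
      proof (intro ballI)
        fix b x assume b: "b \<in> carrier S" and x: "x \<in> X"
        from b f obtain r where r: "r \<in> carrier R" "b = f r" by blast
        show "x \<in> smult_set Q2 b (carrier Q2) \<longrightarrow> x \<in> smult_set Q2 b X"
          using H r x ss[of r] c by metis
      qed
    next
      assume H: "\<forall>s\<in>carrier S. \<forall>x\<in>X. x \<in> smult_set Q2 s (carrier Q2) \<longrightarrow> x \<in> smult_set Q2 s X"
      show "\<forall>s\<in>carrier R. \<forall>x\<in>X. x \<in> smult_set Q1 s (carrier Q1) \<longrightarrow> x \<in> smult_set Q1 s X"
      proof (intro ballI)
        fix r x assume r: "r \<in> carrier R" and x: "x \<in> X"
        have "f r \<in> carrier S" using r f by blast
        then show "x \<in> smult_set Q1 r (carrier Q1) \<longrightarrow> x \<in> smult_set Q1 r X"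
          using H r x ss[of r] c by metis
      qed
    qed
    then show ?thesis unfolding rd_pure_def l by simp
  qed
qed

theorem proposition2p7:
  fixes R :: "('a, 'c) ring_scheme"
  assumes "ring R"
    and hyp: "\<forall>(N :: ('a, 'm) module) M.
               lmodule R N \<and> rd_essential_ext R N M \<longrightarrow> essential_ext R N M"
    and "ideal A R"
  shows "\<forall>(N :: ('a set, 'm) module) M.
           lmodule (R Quot A) N \<and> rd_essential_ext (R Quot A) N M \<longrightarrow>
           essential_ext (R Quot A) N M"
proof (intro allI impI, elim conjE)
  fix N :: "('a set, 'm) module" and M
  assume lm: "lmodule (R Quot A) N" and re: "rd_essential_ext (R Quot A) N M"
  interpret I: ideal A R by fact
  define f where "f = (\<lambda>r. A +>\<^bsub>R\<^esub> r)"
  have hom: "f \<in> ring_hom R (R Quot A)" unfolding f_def by (rule I.rcos_ring_hom)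
  have fsurj: "f ` carrier R = carrier (R Quot A)"
    unfolding f_def FactRing_def A_RCOSETS_def RCOSETS_def a_r_coset_def by auto
  define N' :: "('a, 'm) module" where "N' = \<lparr>carrier = carrier N, monoid.mult = monoid.mult N,
     one = one N, zero = zero N, add = add N, smult = (\<lambda>r x. f r \<odot>\<^bsub>N\<^esub> x)\<rparr>"
  have c: "carrier N' = carrier N" and a: "add N' = add N" and z: "zero N' = zero N"
    and sm: "\<And>r. smult N' r = smult N (f r)"
    unfolding N'_def by (auto simp: fun_eq_iff)
  have smr: "\<forall>r\<in>carrier R. smult N' r = smult N (f r)" using sm by simp
  note tr = transfer_mod[OF c a z fsurj smr]
  have sa: "set_add N' = set_add N" "a_r_coset N' = a_r_coset N"
    using same_add_struct[OF c a z] by auto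
  have qtr: "rd_pure R (quot_module N' K) P = rd_pure (R Quot A) (quot_module N K) P" for K P
  proof (rule transfer_mod(2))
    show "carrier (quot_module N' K) = carrier (quot_module N K)"
      unfolding quot_module_def using same_add_struct[OF c a z] by simp
    show "add (quot_module N' K) = add (quot_module N K)"
      unfolding quot_module_def using sa by simp
    show "zero (quot_module N' K) = zero (quot_module N K)"
      unfolding quot_module_def by simp
    show "f ` carrier R = carrier (R Quot A)" by (rule fsurj)
    show "\<forall>r\<in>carrier R. smult (quot_module N' K) r = smult (quot_module N K) (f r)"
      unfolding quot_module_def smult_set_def using sa sm by simp
  qed
  have ere: "rd_essential_ext R N' M = rd_essential_ext (R Quot A) N M"
    unfolding rd_essential_ext_def using tr qtr sa z by simp
  have ees: "essential_ext R N' M = essential_ext (R Quot A) N M"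
    unfolding essential_ext_def using tr z by simp
  have lm': "lmodule R N'"
  proof -
    have ag: "abelian_group N" and ax: "\<forall>a\<in>carrier (R Quot A). \<forall>x\<in>carrier N. a \<odot>\<^bsub>N\<^esub> x \<in> carrier N"
      "\<forall>a\<in>carrier (R Quot A). \<forall>b\<in>carrier (R Quot A). \<forall>x\<in>carrier N.
        (a \<oplus>\<^bsub>R Quot A\<^esub> b) \<odot>\<^bsub>N\<^esub> x = a \<odot>\<^bsub>N\<^esub> x \<oplus>\<^bsub>N\<^esub> b \<odot>\<^bsub>N\<^esub> x"
      "\<forall>a\<in>carrier (R Quot A). \<forall>x\<in>carrier N. \<forall>y\<in>carrier N.
        a \<odot>\<^bsub>N\<^esub> (x \<oplus>\<^bsub>N\<^esub> y) = a \<odot>\<^bsub>N\<^esub> x \<oplus>\<^bsub>N\<^esub> a \<odot>\<^bsub>N\<^esub> y"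
      "\<forall>a\<in>carrier (R Quot A). \<forall>b\<in>carrier (R Quot A). \<forall>x\<in>carrier N.
        (a \<otimes>\<^bsub>R Quot A\<^esub> b) \<odot>\<^bsub>N\<^esub> x = a \<odot>\<^bsub>N\<^esub> (b \<odot>\<^bsub>N\<^esub> x)"
      "\<forall>x\<in>carrier N. \<one>\<^bsub>R Quot A\<^esub> \<odot>\<^bsub>N\<^esub> x = x"
      using lm unfolding lmodule_def by auto
    interpret G: abelian_group N by (rule ag)
    have ag': "abelian_group N'"
      apply (rule abelian_groupI)
      unfolding c a z
      using G.a_assoc G.a_comm G.l_neg G.a_inv_closed by auto
    have fc: "\<And>r. r \<in> carrier R \<Longrightarrow> f r \<in> carrier (R Quot A)" using fsurj by blast
    have fa: "\<And>r s. r \<in> carrier R \<Longrightarrow> s \<in> carrier R \<Longrightarrow> f (r \<oplus>\<^bsub>R\<^esub> s) = f r \<oplus>\<^bsub>R Quot A\<^esub> f s"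
      using hom by (simp add: ring_hom_add)
    have fm: "\<And>r s. r \<in> carrier R \<Longrightarrow> s \<in> carrier R \<Longrightarrow> f (r \<otimes>\<^bsub>R\<^esub> s) = f r \<otimes>\<^bsub>R Quot A\<^esub> f s"
      using hom by (simp add: ring_hom_mult)
    have f1: "f \<one>\<^bsub>R\<^esub> = \<one>\<^bsub>R Quot A\<^esub>"
      using hom by (simp add: ring_hom_one)
    show ?thesis unfolding lmodule_def c a sm
      using assms(1) ag' ax fc fa fm f1 by simp
  qed
  have "essential_ext R N' M" using hyp lm' re ere by blast
  then show "essential_ext (R Quot A) N M" using ees by simp
qed

end
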